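(* Let $p$ be an odd prime and $k\ge0$. Let $A,B,C,A',B',C'\in\mathbb{Z}_p$ satisfy: - $p\nmid A^2-C^2$ and $p\nmid A'^2-C'^2$; - $p^k$ divides each of $B,C,B',C'$; - $p^{k+1}\nmid C$ and $p^{k+1}\nmid C'$. If $f_{(A,B,C)}\equiv f_{(A',B',C')}\pmod{p^{2k+4}}$, then $A\equiv A'\pmod{p^{2k+3}}$. If only $f_{(A,B,C)}\equiv f_{(A',B',C')}\pmod{p^{2k+3}}$ is assumed, then $A\equiv A'\pmod{p^{2k+2}}$.
   Context: For $A,B,C\in\mathbb{Z}_p$, define $f_{(A,B,C)}(x)=(x^2+pA)^2-p^2(Bx+C)^2\in\mathbb{Z}_p[x]$. Congruences of polynomials are coefficientwise. *)

theory Defs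
  imports "HOL-Computational_Algebra.Polynomial"
begin

text \<open>p-adic integers Z_p modelled as coherent sequences of residues:
  x n is the residue of x modulo p^n, taken in {0..<p^n}.\<close>

definition zp :: "int \<Rightarrow> (nat \<Rightarrow> int) set" where
  "zp p = {x. \<forall>n. 0 \<le> x n \<and> x n < p ^ n \<and> x (Suc n) mod p ^ n = x n}"

definition zp_add :: "int \<Rightarrow> (nat \<Rightarrow> int) \<Rightarrow> (nat \<Rightarrow> int) \<Rightarrow> (nat \<Rightarrow> int)" where
  "zp_add p x y = (\<lambda>n. (x n + y n) mod p ^ n)"

definition zp_mul :: "int \<Rightarrow> (nat \<Rightarrow> int) \<Rightarrow> (nat \<Rightarrow> int) \<Rightarrow> (nat \<Rightarrow> int)" where
  "zp_mul p x y = (\<lambda>n. (x n * y n) mod p ^ n)"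

definition zp_neg :: "int \<Rightarrow> (nat \<Rightarrow> int) \<Rightarrow> (nat \<Rightarrow> int)" where
  "zp_neg p x = (\<lambda>n. (- x n) mod p ^ n)"

definition zp_cong :: "int \<Rightarrow> nat \<Rightarrow> (nat \<Rightarrow> int) \<Rightarrow> (nat \<Rightarrow> int) \<Rightarrow> bool" where
  "zp_cong p m x y \<longleftrightarrow> x m = y m"

definition zp_pow_dvd :: "int \<Rightarrow> nat \<Rightarrow> (nat \<Rightarrow> int) \<Rightarrow> bool" where
  "zp_pow_dvd p k x \<longleftrightarrow> x k = 0"

definition f_int :: "int \<Rightarrow> int \<Rightarrow> int \<Rightarrow> int \<Rightarrow> int poly" where
  "f_int p a b c = [:p * a, 0, 1:] ^ 2 - smult (p ^ 2) ([:c, b:] ^ 2)"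

text \<open>Since reduction Z_p -> Z/p^n is a ring homomorphism, its residue mod p^n is
  the i-th coefficient of f_int evaluated at the residues of A,B,C mod p^n.\<close>
definition f_coeff :: "int \<Rightarrow> (nat \<Rightarrow> int) \<Rightarrow> (nat \<Rightarrow> int) \<Rightarrow> (nat \<Rightarrow> int) \<Rightarrow> nat \<Rightarrow> (nat \<Rightarrow> int)" where
  "f_coeff p A B C i = (\<lambda>n. coeff (f_int p (A n) (B n) (C n)) i mod p ^ n)"

definition f_cong :: "int \<Rightarrow> nat \<Rightarrow> (nat \<Rightarrow> int) \<Rightarrow> (nat \<Rightarrow> int) \<Rightarrow> (nat \<Rightarrow> int)
    \<Rightarrow> (nat \<Rightarrow> int) \<Rightarrow> (nat \<Rightarrow> int) \<Rightarrow> (nat \<Rightarrow> int) \<Rightarrow> bool" where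
  "f_cong p m A B C A' B' C' \<longleftrightarrow> (\<forall>i. zp_cong p m (f_coeff p A B C i) (f_coeff p A' B' C' i))"

end

theory Submission imports Defs "HOL-Computational_Algebra.Primes" begin

lemma pcancel:
  fixes p x y :: int
  assumes "prime p" "\<not> p dvd x" "p^n dvd x*y" shows "p^n dvd y"
proof -
  have "coprime (p^n) x" using assms by (simp add: prime_imp_coprime)
  thus ?thesis using assms(3) by (simp add: coprime_dvd_mult_right_iff)
qed

lemma not_dvd2: fixes p :: int assumes "prime p" "odd p" shows "\<not> p dvd 2"
proof
  assume "p dvd 2"
  hence "p = 2" using assms(1) by (simp add: primes_dvd_imp_eq)
  thus False using assms(2) by simp
qed

lemma not_dvd4: fixes p :: int assumes "prime p" "odd p" shows "\<not> p dvd 4"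
proof
  assume "p dvd 4"
  hence "p dvd 2 * 2" by simp
  thus False using not_dvd2[OF assms] prime_dvd_mult_iff[OF assms(1)] by blast
qed

lemma core1:
  fixes p a b c a' b' c' :: int
  assumes p: "prime p" "odd p"
  and hb: "p^k dvd b" and hc: "p^k dvd c" and hb': "p^k dvd b'" and hc': "p^k dvd c'"
  and nc: "\<not> p^(k+1) dvd c" and nc': "\<not> p^(k+1) dvd c'"
  and h2: "p^(2*k+4) dvd (2*p*a - p^2*b^2) - (2*p*a' - p^2*b'^2)"
  and h1: "p^(2*k+4) dvd (- 2*p^2*b*c) - (- 2*p^2*b'*c')"
  and h0: "p^(2*k+4) dvd (p^2*a^2 - p^2*c^2) - (p^2*a'^2 - p^2*c'^2)"
  shows "p^(2*k+3) dvd a - a'"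
proof -
  have p0: "p \<noteq> 0" using p by auto
  define q where "q = p^k"
  have q2: "p^(2*k) = q^2" by (simp add: q_def power_mult[symmetric] mult.commute)
  have e4: "p^(2*k+4) = q^2*p^4" using power_add[of p "2*k" 4] q2 by simp
  have e3: "p^(2*k+3) = q^2*p^3" using power_add[of p "2*k" 3] q2 by simp
  have e2: "p^(2*k+2) = q^2*p^2" using power_add[of p "2*k" 2] q2 by simp
  have e1: "p^(2*k+1) = q^2*p" using power_add[of p "2*k" 1] q2 by simp
  obtain \<beta> where b: "b = p^k*\<beta>" using hb by blast
  obtain \<beta>' where b': "b' = p^k*\<beta>'" using hb' by blast
  obtain \<gamma> where c: "c = p^k*\<gamma>" using hc by blast
  obtain \<gamma>' where c': "c' = p^k*\<gamma>'" using hc' by blast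
  have g: "\<not> p dvd \<gamma>" using nc p0 by (simp add: c)
  have g': "\<not> p dvd \<gamma>'" using nc' p0 by (simp add: c')
  define E where "E = \<beta>^2 - \<beta>'^2"
  define G where "G = \<gamma>^2 - \<gamma>'^2"
  define P where "P = \<beta>*\<gamma> - \<beta>'*\<gamma>'"
  define D where "D = 2*(a-a') - p^(2*k+1)*E"
  have "(- 2*p^2*b*c) - (- 2*p^2*b'*c') = p^(2*k+2) * (-2*P)"
    unfolding b b' c c' P_def e2 q_def[symmetric] by algebra
  moreover have "p^(2*k+4) = p^(2*k+2) * p^2" unfolding e4 e2 by algebra
  ultimately have "p^2 dvd -2*P" using h1 p0 by simp
  hence "p^2 dvd 2*P" by simp
  hence hP: "p^2 dvd P" using pcancel[OF p(1) not_dvd2[OF p]] by blast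
  have "(2*p*a - p^2*b^2) - (2*p*a' - p^2*b'^2) = p * D"
    unfolding D_def E_def b b' e1 q_def[symmetric] by algebra
  moreover have "p^(2*k+4) = p * p^(2*k+3)" unfolding e4 e3 by algebra
  ultimately have hD: "p^(2*k+3) dvd D" using h2 p0 by simp
  have "(p^2*a^2 - p^2*c^2) - (p^2*a'^2 - p^2*c'^2) = p^2 * ((a^2-a'^2) - p^(2*k)*G)"
    unfolding G_def c c' q2 q_def[symmetric] by algebra
  moreover have "p^(2*k+4) = p^2 * p^(2*k+2)" unfolding e4 e2 by algebra
  ultimately have h0': "p^(2*k+2) dvd (a^2-a'^2) - p^(2*k)*G" using h0 p0 by simp
  hence "p^(2*k+2) dvd 4*((a^2-a'^2) - p^(2*k)*G)" by (rule dvd_mult)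
  moreover have "4*((a^2-a'^2) - p^(2*k)*G) = D*(2*(a+a')) + p^(2*k)*(2*p*E*(a+a') - 4*G)"
    unfolding D_def e1 q2 by algebra
  moreover have "p^(2*k+2) dvd D*(2*(a+a'))"
  proof -
    have "p^(2*k+2) dvd p^(2*k+3)" by (rule le_imp_power_dvd) simp
    hence "p^(2*k+2) dvd D" using hD by (rule dvd_trans)
    thus ?thesis by (rule dvd_mult2)
  qed
  ultimately have "p^(2*k+2) dvd D*(2*(a+a')) + p^(2*k)*(2*p*E*(a+a') - 4*G)" by simp
  hence "p^(2*k+2) dvd p^(2*k)*(2*p*E*(a+a') - 4*G)" using \<open>p^(2*k+2) dvd D*(2*(a+a'))\<close> by (simp add: dvd_add_right_iff)
  moreover have "p^(2*k+2) = p^(2*k)*p^2" by (simp add: e2 q2 power2_eq_square)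
  ultimately have key: "p^2 dvd 2*p*E*(a+a') - 4*G" using p0 by simp
  have pp2: "p dvd p^2" by simp
  have k1: "p dvd 2*p*E*(a+a') - 4*G" using dvd_trans[OF pp2 key] .
  have "p dvd 2*p*E*(a+a')" by simp
  hence "p dvd 2*p*E*(a+a') - (2*p*E*(a+a') - 4*G)" using k1 by (rule dvd_diff)
  hence "p dvd 4*G" by simp
  hence pG: "p dvd G" using p not_dvd4 prime_dvd_mult_iff by blast
  have iden: "\<gamma>'^2 * E = - (\<beta>^2*G) + 2*\<beta>*\<gamma>*P - P^2"
    unfolding E_def G_def P_def by algebra
  have pP: "p dvd P" using dvd_trans[OF pp2 hP] .
  have "p dvd - (\<beta>^2*G) + 2*\<beta>*\<gamma>*P - P^2" using pG pP by (simp add: power2_eq_square)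
  hence "p^1 dvd \<gamma>'^2 * E" using iden by simp
  moreover have "\<not> p dvd \<gamma>'^2" using g' p prime_dvd_power by blast
  ultimately have pE: "p dvd E" using pcancel[OF p(1)] by fastforce
  have "p^2 dvd 2*p*E*(a+a')" using pE by (simp add: power2_eq_square mult_dvd_mono)
  hence "p^2 dvd 2*p*E*(a+a') - (2*p*E*(a+a') - 4*G)" using key by (rule dvd_diff)
  hence "p^2 dvd 4*G" by simp
  hence p2G: "p^2 dvd G" using pcancel[OF p(1) not_dvd4[OF p]] by blast
  have "p^2 dvd - (\<beta>^2*G) + 2*\<beta>*\<gamma>*P - P^2" using p2G hP
    by (simp add: power2_eq_square mult_dvd_mono)
  hence "p^2 dvd \<gamma>'^2 * E" using iden by simp
  hence p2E: "p^2 dvd E" using pcancel[OF p(1)] \<open>\<not> p dvd \<gamma>'^2\<close> by blast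
  have "q^2*p*p^2 dvd q^2*p*E" using p2E by (rule mult_dvd_mono[OF dvd_refl])
  hence "p^(2*k+3) dvd p^(2*k+1)*E" unfolding e3 e1 by (simp add: power2_eq_square power3_eq_cube mult_ac)
  hence "p^(2*k+3) dvd D + p^(2*k+1)*E" using hD by (rule dvd_add[rotated])
  hence "p^(2*k+3) dvd 2*(a-a')" unfolding D_def by simp
  thus ?thesis using pcancel[OF p(1) not_dvd2[OF p]] by blast
qed
lemma core2:
  fixes p a b c a' b' c' :: int
  assumes p: "prime p" "odd p"
  and hb: "p^k dvd b" and hc: "p^k dvd c" and hb': "p^k dvd b'" and hc': "p^k dvd c'"
  and nc: "\<not> p^(k+1) dvd c" and nc': "\<not> p^(k+1) dvd c'"
  and h2: "p^(2*k+3) dvd (2*p*a - p^2*b^2) - (2*p*a' - p^2*b'^2)"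
  and h1: "p^(2*k+3) dvd (- 2*p^2*b*c) - (- 2*p^2*b'*c')"
  and h0: "p^(2*k+3) dvd (p^2*a^2 - p^2*c^2) - (p^2*a'^2 - p^2*c'^2)"
  shows "p^(2*k+2) dvd a - a'"
proof -
  have p0: "p \<noteq> 0" using p by auto
  define q where "q = p^k"
  have q2: "p^(2*k) = q^2" by (simp add: q_def power_mult[symmetric] mult.commute)
  have e3: "p^(2*k+3) = q^2*p^3" using power_add[of p "2*k" 3] q2 by simp
  have e2: "p^(2*k+2) = q^2*p^2" using power_add[of p "2*k" 2] q2 by simp
  have e1: "p^(2*k+1) = q^2*p" using power_add[of p "2*k" 1] q2 by simp
  obtain \<beta> where b: "b = p^k*\<beta>" using hb by blast
  obtain \<beta>' where b': "b' = p^k*\<beta>'" using hb' by blast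
  obtain \<gamma> where c: "c = p^k*\<gamma>" using hc by blast
  obtain \<gamma>' where c': "c' = p^k*\<gamma>'" using hc' by blast
  have g: "\<not> p dvd \<gamma>" using nc p0 by (simp add: c)
  have g': "\<not> p dvd \<gamma>'" using nc' p0 by (simp add: c')
  define E where "E = \<beta>^2 - \<beta>'^2"
  define G where "G = \<gamma>^2 - \<gamma>'^2"
  define P where "P = \<beta>*\<gamma> - \<beta>'*\<gamma>'"
  define D where "D = 2*(a-a') - p^(2*k+1)*E"
  have "(- 2*p^2*b*c) - (- 2*p^2*b'*c') = p^(2*k+2) * (-2*P)"
    unfolding b b' c c' P_def e2 q_def[symmetric] by algebra
  moreover have "p^(2*k+3) = p^(2*k+2) * p" unfolding e3 e2 by algebra
  ultimately have "p dvd -2*P" using h1 p0 by simp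
  hence "p dvd 2*P" by simp
  hence pP: "p dvd P" using p not_dvd2 prime_dvd_mult_iff by blast
  have "(2*p*a - p^2*b^2) - (2*p*a' - p^2*b'^2) = p * D"
    unfolding D_def E_def b b' e1 q_def[symmetric] by algebra
  moreover have "p^(2*k+3) = p * p^(2*k+2)" unfolding e3 e2 by algebra
  ultimately have hD: "p^(2*k+2) dvd D" using h2 p0 by simp
  have "(p^2*a^2 - p^2*c^2) - (p^2*a'^2 - p^2*c'^2) = p^2 * ((a^2-a'^2) - p^(2*k)*G)"
    unfolding G_def c c' q2 q_def[symmetric] by algebra
  moreover have "p^(2*k+3) = p^2 * p^(2*k+1)" unfolding e3 e1 by algebra
  ultimately have h0': "p^(2*k+1) dvd (a^2-a'^2) - p^(2*k)*G" using h0 p0 by simp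
  have "p^(2*k+1) dvd p^(2*k+2)" by (rule le_imp_power_dvd) simp
  hence "p^(2*k+1) dvd D" using hD by (rule dvd_trans)
  moreover have "p^(2*k+1) dvd p^(2*k+1)*E" by simp
  ultimately have "p^(2*k+1) dvd D + p^(2*k+1)*E" by (rule dvd_add)
  hence "p^(2*k+1) dvd 2*(a-a')" unfolding D_def by simp
  hence "p^(2*k+1) dvd a-a'" using pcancel[OF p(1) not_dvd2[OF p]] by blast
  hence "p^(2*k+1) dvd (a-a')*(a+a')" by (rule dvd_mult2)
  moreover have "(a-a')*(a+a') = a^2-a'^2" by algebra
  ultimately have "p^(2*k+1) dvd a^2-a'^2" by simp
  hence "p^(2*k+1) dvd (a^2-a'^2) - ((a^2-a'^2) - p^(2*k)*G)" using h0' by (rule dvd_diff)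
  hence "p^(2*k)*p dvd p^(2*k)*G" by (simp add: power_add)
  hence pG: "p dvd G" using p0 by simp
  have iden: "\<gamma>'^2 * E = - (\<beta>^2*G) + 2*\<beta>*\<gamma>*P - P^2"
    unfolding E_def G_def P_def by algebra
  have "p dvd - (\<beta>^2*G) + 2*\<beta>*\<gamma>*P - P^2" using pG pP by (simp add: power2_eq_square)
  hence "p^1 dvd \<gamma>'^2 * E" using iden by simp
  moreover have "\<not> p dvd \<gamma>'^2" using g' p prime_dvd_power by blast
  ultimately have pE: "p dvd E" using pcancel[OF p(1)] by fastforce
  have "q^2*p*p dvd q^2*p*E" using pE by (rule mult_dvd_mono[OF dvd_refl])
  hence "p^(2*k+2) dvd p^(2*k+1)*E" unfolding e2 e1 by (simp add: power2_eq_square mult_ac)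
  hence "p^(2*k+2) dvd D + p^(2*k+1)*E" using hD by (rule dvd_add[rotated])
  hence "p^(2*k+2) dvd 2*(a-a')" unfolding D_def by simp
  thus ?thesis using pcancel[OF p(1) not_dvd2[OF p]] by blast
qed

lemma f_int_eq: "f_int p a b c = [: p^2*a^2 - p^2*c^2, -2*p^2*b*c, 2*p*a - p^2*b^2, 0, 1:]"
  by (simp add: f_int_def power2_eq_square algebra_simps)

lemma zp_mod:
  assumes "x \<in> zp p" "p > 0" "j \<le> n" shows "x n mod p^j = x j"
  using assms(3)
proof (induction n)
  case 0
  have "0 \<le> x 0 \<and> x 0 < p^0" using assms(1) unfolding zp_def by blast
  thus ?case using 0 by simp
next
  case (Suc n)
  show ?case
  proof (cases "j = Suc n")
    case True
    have "0 \<le> x (Suc n)" "x (Suc n) < p^Suc n" using assms(1) unfolding zp_def by blast+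
    thus ?thesis using True by (simp only: mod_pos_pos_trivial)
  next
    case False
    hence "j \<le> n" using Suc.prems by simp
    have "x (Suc n) mod p^n = x n" using assms(1) by (simp add: zp_def)
    hence "x (Suc n) mod p^j = x n mod p^j"
      using \<open>j \<le> n\<close> by (metis mod_mod_cancel le_imp_power_dvd)
    thus ?thesis using Suc.IH \<open>j \<le> n\<close> by simp
  qed
qed

lemma fcong_coeffs:
  assumes "f_cong p m A B C A' B' C'"
  shows "p^m dvd (p^2*A m^2 - p^2*C m^2) - (p^2*A' m^2 - p^2*C' m^2)"
    "p^m dvd (- 2*p^2*B m*C m) - (- 2*p^2*B' m*C' m)"
    "p^m dvd (2*p*A m - p^2*B m^2) - (2*p*A' m - p^2*B' m^2)"
proof -
  have h: "\<And>i. coeff (f_int p (A m) (B m) (C m)) i mod p^m = coeff (f_int p (A' m) (B' m) (C' m)) i mod p^m"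
    using assms by (simp add: f_cong_def zp_cong_def f_coeff_def)
  show "p^m dvd (p^2*A m^2 - p^2*C m^2) - (p^2*A' m^2 - p^2*C' m^2)"
    using h[of 0] by (simp add: f_int_eq mod_eq_dvd_iff)
  show "p^m dvd (- 2*p^2*B m*C m) - (- 2*p^2*B' m*C' m)"
    using h[of 1] by (simp add: f_int_eq mod_eq_dvd_iff)
  show "p^m dvd (2*p*A m - p^2*B m^2) - (2*p*A' m - p^2*B' m^2)"
    using h[of 2] by (simp add: f_int_eq mod_eq_dvd_iff numeral_2_eq_2)
qed

theorem claim4:
  fixes p :: int and k :: nat and A B C A' B' C' :: "nat \<Rightarrow> int"
  assumes "prime p" and "odd p"
    and "A \<in> zp p" "B \<in> zp p" "C \<in> zp p" "A' \<in> zp p" "B' \<in> zp p" "C' \<in> zp p"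
    and "\<not> zp_pow_dvd p 1 (zp_add p (zp_mul p A A) (zp_neg p (zp_mul p C C)))"
    and "\<not> zp_pow_dvd p 1 (zp_add p (zp_mul p A' A') (zp_neg p (zp_mul p C' C')))"
    and "zp_pow_dvd p k B" "zp_pow_dvd p k C" "zp_pow_dvd p k B'" "zp_pow_dvd p k C'"
    and "\<not> zp_pow_dvd p (k + 1) C" "\<not> zp_pow_dvd p (k + 1) C'"
  shows "(f_cong p (2 * k + 4) A B C A' B' C' \<longrightarrow> zp_cong p (2 * k + 3) A A')
       \<and> (f_cong p (2 * k + 3) A B C A' B' C' \<longrightarrow> zp_cong p (2 * k + 2) A A')"
proof -
  have p0: "p > 0" using assms(1) prime_gt_0_int by blast
  have dv: "p^k dvd X m" if "X \<in> zp p" "zp_pow_dvd p k X" "k + 1 \<le> m" for X m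
  proof -
    have "X m mod p^k = X k" using that(3) by (intro zp_mod[OF that(1) p0]) simp
    thus ?thesis using that(2) by (simp add: zp_pow_dvd_def dvd_eq_mod_eq_0)
  qed
  have ndv: "\<not> p^(k+1) dvd X m" if "X \<in> zp p" "\<not> zp_pow_dvd p (k+1) X" "k + 1 \<le> m" for X m
  proof -
    have "X m mod p^(k+1) = X (k+1)" using zp_mod[OF that(1) p0 that(3)] .
    thus ?thesis using that(2) by (simp add: zp_pow_dvd_def dvd_eq_mod_eq_0)
  qed
  have fin: "zp_cong p j A A'" if "p^j dvd A (j+1) - A' (j+1)" for j
  proof -
    have "A (Suc j) mod p^j = A' (Suc j) mod p^j" using that by (simp add: mod_eq_dvd_iff)
    thus ?thesis using zp_mod[OF assms(3) p0, of j "Suc j"] zp_mod[OF assms(6) p0, of j "Suc j"]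
      by (simp add: zp_cong_def)
  qed
  show ?thesis
  proof (intro conjI impI)
    assume H: "f_cong p (2 * k + 4) A B C A' B' C'"
    let ?m = "2*k+4"
    have "p^(2*k+3) dvd A ?m - A' ?m"
      using core1[OF assms(1,2) dv[OF assms(4,11)] dv[OF assms(5,12)] dv[OF assms(7,13)] dv[OF assms(8,14)]
          ndv[OF assms(5,15)] ndv[OF assms(8,16)] fcong_coeffs(3)[OF H] fcong_coeffs(2)[OF H] fcong_coeffs(1)[OF H]]
      by simp
    moreover have eq: "2*k+3+1 = 2*k+4" by simp
    ultimately have "p^(2*k+3) dvd A (2*k+3+1) - A' (2*k+3+1)" by (simp only: eq)
    thus "zp_cong p (2 * k + 3) A A'" by (rule fin)
  next
    assume H: "f_cong p (2 * k + 3) A B C A' B' C'"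
    let ?m = "2*k+3"
    have "p^(2*k+2) dvd A ?m - A' ?m"
      using core2[OF assms(1,2) dv[OF assms(4,11)] dv[OF assms(5,12)] dv[OF assms(7,13)] dv[OF assms(8,14)]
          ndv[OF assms(5,15)] ndv[OF assms(8,16)] fcong_coeffs(3)[OF H] fcong_coeffs(2)[OF H] fcong_coeffs(1)[OF H]]
      by simp
    moreover have eq: "2*k+2+1 = 2*k+3" by simp
    ultimately have "p^(2*k+2) dvd A (2*k+2+1) - A' (2*k+2+1)" by (simp only: eq)
    thus "zp_cong p (2 * k + 2) A A'" by (rule fin)
  qed
qed

end
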